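(* Let $(\phi_1,\dots,\phi_N)\in\mathcal{U}$ be an arbitrary $N$-tuple of admissible stationary strategies. Assume there exists a constant $L_s>0$ with $$|\phi_i(x_1)-\phi_i(x_2)|\le L_s |x_1-x_2|,\quad i=1,\dots, N,$$ and assume hypotheses H1, H2 and H3 hold. Then for every $x\in\mathbb{V}$, $$\lim_{h\rightarrow 0} \left|W_{i,h}(\phi_{i},\phi_{-i},x)- W_i(\phi_{i},\phi_{-i},x)\right|=0,\quad i=1,\dots,N.$$
   Context: Setting: an $N$-player infinite-horizon differential game. Player $i$ maximizes over own control $u_i$ $$W_i(u_i,u_{-i},x_0)=\int_0^\infty f_i(x,u_i,u_{-i})e^{-\rho t}\,\mathrm{d}t$$ subject to $\dot x=g(x,u_i,u_{-i})$, $x(0)=x_0$, where $f_i:\mathbb{V}\times\mathbb{U}_1\times\dots\times\mathbb{U}_N\to\mathbb{R}$, $g:\mathbb{V}\times\mathbb{U}_1\times\dots\times\mathbb{U}_N\to\mathbb{R}^n$ are continuous, $\mathbb{V}\subset\mathbb{R}^n$, $\mathbb{U}_i\subset\mathbb{R}^m$, $\rho>0$, and $u_{-i}=[u_1,\dots,u_{i-1},u_{i+1},\dots,u_N]$. $\mathcal{U}=\mathcal{U}_1\times\dots\times\mathcal{U}_N$ is the set of admissible stationary Markovian strategies: each $\mathcal{U}_i$ is a set of measurable functions $\phi_i:\mathbb{V}\to\mathbb{U}_i$ such that for every $(\phi_1,\dots,\phi_N)\in\mathcal{U}$ and every $x_0\in\mathbb{V}$ the state equation with $u_i=\phi_i(x(t))$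 has a unique absolutely continuous solution $x(t)\in\mathbb{V}$ for all $t\ge0$. $W_i(\phi_i,\phi_{-i},x)$ denotes the payoff when the strategies are used from initial state $x$. Discrete-time game: for $h>0$, $t_n=nh$, $\beta_h=1-\rho h$, player $i$ maximizes $$W_{i,h}(\boldsymbol{u}_i,\boldsymbol{u}_{-i},x_0)=h\sum_{n=0}^\infty \beta_h^n f_i(x_n,u_{i,n},u_{-i,n})$$ subject to $x_{n+1}=x_n+hg(x_n,u_{i,n},u_{-i,n})$. It is assumed that for every $x_0\in\mathbb{V}$ and every $(\psi_1,\dots,\psi_N)\in\mathcal{U}$ this recursion with $u_{j,n}=\psi_j(x_n)$ is well defined with $x_n\in\mathbb{V}$ for all $n$; $W_{i,h}(\psi_i,\psi_{-i},x_0)$ denotes the corresponding discrete payoff. Hypotheses: H1: there is $L_g$ with $|g(x,u_1,\dots,u_N)-g(y,v_1,\dots,v_N)|\le L_g(|x-y|+\sum_{j=1}^N|u_j-v_j|)$ for all arguments. H2: there are $L_i$ with $|f_i(x,u_1,\dots,u_N)-f_i(y,v_1,\dots,v_N)|\le L_i(|x-y|+\sum_{j=1}^N|u_j-v_j|)$. H3: there is $M$ with $|f_i(x,u_1,\dots,u_N)|\le M$ for all arguments. *)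

theory Defs
  imports "HOL-Analysis.Analysis"
begin

text \<open>Players are indexed by a finite type 'p (N = CARD('p)); states live in
  real^'n, controls in real^'m.\<close>

definition abs_continuous_on :: "real set \<Rightarrow> (real \<Rightarrow> 'a::real_normed_vector) \<Rightarrow> bool" where
  "abs_continuous_on S x \<longleftrightarrow>
     (\<forall>\<epsilon>>0. \<exists>\<delta>>0. \<forall>(n::nat) (a::nat\<Rightarrow>real) b.
        (\<forall>k<n. a k \<le> b k \<and> a k \<in> S \<and> b k \<in> S) \<and>
        (\<forall>k<n. \<forall>l<n. k \<noteq> l \<longrightarrow> b k \<le> a l \<or> b l \<le> a k) \<and>
        (\<Sum>k<n. b k - a k) < \<delta>
        \<longrightarrow> (\<Sum>k<n. norm (x (b k) - x (a k))) < \<epsilon>)"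

definition is_solution ::
  "('a::euclidean_space) set \<Rightarrow> ('a \<Rightarrow> ('p \<Rightarrow> 'b) \<Rightarrow> 'a) \<Rightarrow> ('p \<Rightarrow> 'a \<Rightarrow> 'b) \<Rightarrow> 'a \<Rightarrow> (real \<Rightarrow> 'a) \<Rightarrow> bool" where
  "is_solution V g \<phi> x0 x \<longleftrightarrow>
     x 0 = x0 \<and> (\<forall>t\<ge>0. x t \<in> V) \<and>
     (\<forall>T\<ge>0. abs_continuous_on {0..T} x) \<and>
     (AE t in lborel. 0 < t \<longrightarrow> (x has_vector_derivative g (x t) (\<lambda>j. \<phi> j (x t))) (at t))"

definition admissible ::
  "('a::euclidean_space) set \<Rightarrow> ('p \<Rightarrow> ('b::euclidean_space) set) \<Rightarrow> ('a \<Rightarrow> ('p \<Rightarrow> 'b) \<Rightarrow> 'a)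
    \<Rightarrow> ('p \<Rightarrow> 'a \<Rightarrow> 'b) \<Rightarrow> bool" where
  "admissible V U g \<phi> \<longleftrightarrow>
     (\<forall>i. \<phi> i \<in> borel_measurable (restrict_space borel V) \<and> (\<forall>x\<in>V. \<phi> i x \<in> U i)) \<and>
     (\<forall>x0\<in>V. \<exists>x. is_solution V g \<phi> x0 x \<and>
        (\<forall>y. is_solution V g \<phi> x0 y \<longrightarrow> (\<forall>t\<ge>0. y t = x t)))"

definition traj :: "('a::euclidean_space) set \<Rightarrow> ('a \<Rightarrow> ('p \<Rightarrow> 'b) \<Rightarrow> 'a) \<Rightarrow> ('p \<Rightarrow> 'a \<Rightarrow> 'b) \<Rightarrow> 'a \<Rightarrow> real \<Rightarrow> 'a" where
  "traj V g \<phi> x0 = (SOME x. is_solution V g \<phi> x0 x)"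

definition payoff ::
  "('a::euclidean_space) set \<Rightarrow> ('a \<Rightarrow> ('p \<Rightarrow> 'b) \<Rightarrow> 'a) \<Rightarrow> ('p \<Rightarrow> 'a \<Rightarrow> ('p \<Rightarrow> 'b) \<Rightarrow> real) \<Rightarrow> real
    \<Rightarrow> ('p \<Rightarrow> 'a \<Rightarrow> 'b) \<Rightarrow> 'p \<Rightarrow> 'a \<Rightarrow> real" where
  "payoff V g f \<rho> \<phi> i x0 =
     integral {0..} (\<lambda>t. f i (traj V g \<phi> x0 t) (\<lambda>j. \<phi> j (traj V g \<phi> x0 t)) * exp (- \<rho> * t))"

fun euler :: "('a::real_vector \<Rightarrow> ('p \<Rightarrow> 'b) \<Rightarrow> 'a) \<Rightarrow> ('p \<Rightarrow> 'a \<Rightarrow> 'b) \<Rightarrow> real \<Rightarrow> 'a \<Rightarrow> nat \<Rightarrow> 'a" where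
  "euler g \<phi> h x0 0 = x0"
| "euler g \<phi> h x0 (Suc n) =
     euler g \<phi> h x0 n + h *\<^sub>R g (euler g \<phi> h x0 n) (\<lambda>j. \<phi> j (euler g \<phi> h x0 n))"

definition payoff_h ::
  "('a::real_vector \<Rightarrow> ('p \<Rightarrow> 'b) \<Rightarrow> 'a) \<Rightarrow> ('p \<Rightarrow> 'a \<Rightarrow> ('p \<Rightarrow> 'b) \<Rightarrow> real) \<Rightarrow> real
    \<Rightarrow> real \<Rightarrow> ('p \<Rightarrow> 'a \<Rightarrow> 'b) \<Rightarrow> 'p \<Rightarrow> 'a \<Rightarrow> real" where
  "payoff_h g f \<rho> h \<phi> i x0 =
     h * (\<Sum>n. (1 - \<rho> * h) ^ n * f i (euler g \<phi> h x0 n) (\<lambda>j. \<phi> j (euler g \<phi> h x0 n)))"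

end

theory Submission
  imports Defs
begin

abbreviation vol :: "real set \<Rightarrow> real" where "vol K \<equiv> Henstock_Kurzweil_Integration.content K"

lemma intervals_disj:
  fixes u v u' v' :: real
  assumes "u < v" "u' < v'" "{u<..<v} \<inter> {u'<..<v'} = {}"
  shows "v \<le> u' \<or> v' \<le> u"
proof (rule ccontr)
  assume "\<not> ?thesis"
  then have "(max u u' + min v v')/2 \<in> {u<..<v} \<inter> {u'<..<v'}" using assms by auto
  then show False using assms by blast
qed

lemma ac_finite_sum:
  fixes x :: "real \<Rightarrow> 'a::real_normed_vector"
  assumes ac: "abs_continuous_on S x" and e: "e > 0"
  obtains \<delta> where "\<delta> > 0" "\<And>q. finite q \<Longrightarrow> (\<forall>K\<in>q. \<exists>u v. K = {u..v} \<and> u < v \<and> {u..v} \<subseteq> S) \<Longrightarrow>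
      (\<forall>K\<in>q. \<forall>K'\<in>q. K \<noteq> K' \<longrightarrow> interior K \<inter> interior K' = {}) \<Longrightarrow>
      (\<Sum>K\<in>q. vol K) < \<delta> \<Longrightarrow> (\<Sum>K\<in>q. norm (x (Sup K) - x (Inf K))) < e"
proof -
  obtain \<delta> where d: "\<delta> > 0" and dd: "\<And>(n::nat) (a::nat\<Rightarrow>real) b.
        (\<forall>k<n. a k \<le> b k \<and> a k \<in> S \<and> b k \<in> S) \<and>
        (\<forall>k<n. \<forall>l<n. k \<noteq> l \<longrightarrow> b k \<le> a l \<or> b l \<le> a k) \<and>
        (\<Sum>k<n. b k - a k) < \<delta>
        \<Longrightarrow> (\<Sum>k<n. norm (x (b k) - x (a k))) < e"
    using ac[unfolded abs_continuous_on_def, rule_format, OF e] by auto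
  show ?thesis
  proof (rule that[OF d])
    fix q :: "real set set"
    assume fq: "finite q" and iv: "\<forall>K\<in>q. \<exists>u v. K = {u..v} \<and> u < v \<and> {u..v} \<subseteq> S"
      and dj: "\<forall>K\<in>q. \<forall>K'\<in>q. K \<noteq> K' \<longrightarrow> interior K \<inter> interior K' = {}"
      and sm: "(\<Sum>K\<in>q. vol K) < \<delta>"
    obtain h where h: "bij_betw h {0..<card q} q" using ex_bij_betw_nat_finite[OF fq] by blast
    define n where "n = card q"
    define a where "a k = Inf (h k)" for k
    define b where "b k = Sup (h k)" for k
    have hk: "h k \<in> q" if "k < n" for k using h that unfolding n_def bij_betw_def by auto
    have ab: "h k = {a k..b k} \<and> a k < b k \<and> {a k..b k} \<subseteq> S" if kn: "k < n" for k
    proof -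
      obtain u v where "h k = {u..v}" "u < v" "{u..v} \<subseteq> S" using iv hk[OF kn] by blast
      then show ?thesis unfolding a_def b_def by auto
    qed
    have c1: "\<forall>k<n. a k \<le> b k \<and> a k \<in> S \<and> b k \<in> S"
    proof (intro allI impI)
      fix k assume "k < n"
      then have "a k < b k" "{a k..b k} \<subseteq> S" using ab by blast+
      then show "a k \<le> b k \<and> a k \<in> S \<and> b k \<in> S" by auto
    qed
    have c2: "\<forall>k<n. \<forall>l<n. k \<noteq> l \<longrightarrow> b k \<le> a l \<or> b l \<le> a k"
    proof (intro allI impI)
      fix k l assume "k < n" "l < n" "k \<noteq> l"
      then have "h k \<noteq> h l" using h unfolding bij_betw_def inj_on_def n_def by auto
      then have "interior (h k) \<inter> interior (h l) = {}" using dj hk \<open>k<n\<close> \<open>l<n\<close> by blast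
      then have "{a k<..<b k} \<inter> {a l<..<b l} = {}" using ab[OF \<open>k<n\<close>] ab[OF \<open>l<n\<close>] by simp
      then show "b k \<le> a l \<or> b l \<le> a k" using intervals_disj ab \<open>k<n\<close> \<open>l<n\<close> by blast
    qed
    have s1: "(\<Sum>k<n. b k - a k) = (\<Sum>K\<in>q. vol K)"
    proof -
      have "(\<Sum>k<n. b k - a k) = (\<Sum>k<n. vol (h k))"
      proof (intro sum.cong refl)
        fix k assume "k \<in> {..<n}"
        then have "h k = {a k..b k}" "a k < b k" using ab by auto
        then show "b k - a k = vol (h k)" by simp
      qed
      also have "\<dots> = (\<Sum>K\<in>q. vol K)"
        using sum.reindex_bij_betw[OF h, of vol] by (simp add: n_def atLeast0LessThan)
      finally show ?thesis .
    qed
    have s2: "(\<Sum>k<n. norm (x (b k) - x (a k))) = (\<Sum>K\<in>q. norm (x (Sup K) - x (Inf K)))"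
      using sum.reindex_bij_betw[OF h, of "\<lambda>K. norm (x (Sup K) - x (Inf K))"]
      by (simp add: n_def atLeast0LessThan a_def b_def)
    show "(\<Sum>K\<in>q. norm (x (Sup K) - x (Inf K))) < e"
    proof -
      have "(\<Sum>k<n. b k - a k) < \<delta>" using s1 sm by simp
      from dd[OF conjI[OF c1 conjI[OF c2 this]]] s2 show ?thesis by simp
    qed
  qed
qed

lemma tagged_Z_part:
  fixes x :: "real \<Rightarrow> 'a::real_normed_vector"
  assumes p: "p tagged_division_of {a..b}" and sub: "{a..b} \<subseteq> S"
   and dprop: "\<And>q. finite q \<Longrightarrow> (\<forall>K\<in>q. \<exists>u v. K = {u..v} \<and> u < v \<and> {u..v} \<subseteq> S) \<Longrightarrow>
      (\<forall>K\<in>q. \<forall>K'\<in>q. K \<noteq> K' \<longrightarrow> interior K \<inter> interior K' = {}) \<Longrightarrow>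
      (\<Sum>K\<in>q. vol K) < \<delta> \<Longrightarrow> (\<Sum>K\<in>q. norm (x (Sup K) - x (Inf K))) < e"
   and small: "(\<Sum>(t,K)\<in>p. vol K * indicator Z t) < \<delta>"
  shows "(\<Sum>(t,K)\<in>p. indicator Z t * norm (x (Sup K) - x (Inf K))) < e"
proof -
  define p' where "p' = {(t,K)\<in>p. t \<in> Z \<and> vol K > 0}"
  have fp: "finite p" using p by blast
  have p'sub: "p' \<subseteq> p" by (auto simp: p'_def)
  have fp': "finite p'" using fp p'sub finite_subset by blast
  have Kform: "\<exists>u v. K = {u..v} \<and> u \<le> v \<and> K \<subseteq> {a..b}" if tk: "(t,K) \<in> p" for t K
  proof -
    obtain u v where "K = cbox u v" using tagged_division_ofD(4)[OF p tk] by blast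
    moreover have "t \<in> K" using tagged_division_ofD(2)[OF p tk] .
    moreover have "K \<subseteq> {a..b}" using tagged_division_ofD(3)[OF p tk] .
    ultimately show ?thesis by auto
  qed
  have inj: "inj_on snd p'"
  proof (rule inj_onI)
    fix y z assume y: "y \<in> p'" and z: "z \<in> p'" and eq: "snd y = snd z"
    obtain t K where ty: "y = (t,K)" by (cases y)
    obtain t' K' where tz: "z = (t',K')" by (cases z)
    show "y = z"
    proof (rule ccontr)
      assume "y \<noteq> z"
      then have "interior K \<inter> interior K' = {}"
        using tagged_division_ofD(5)[OF p, of t K t' K'] y z ty tz p'_def by auto
      moreover have "K = K'" using eq ty tz by simp
      moreover have "vol K > 0" using y ty p'_def by auto
      moreover obtain u v where "K = {u..v}"
      proof -
        have "(t,K) \<in> p" using y ty p'_def by auto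
        then show ?thesis using Kform that by blast
      qed
      ultimately show False by (auto split: if_splits)
    qed
  qed
  define q where "q = snd ` p'"
  have zero: "indicator Z t * norm (x (Sup K) - x (Inf K)) = 0" if tk: "(t,K) \<in> p - p'" for t K
  proof (cases "t \<in> Z")
    case True
    then have "vol K \<le> 0" using tk p'_def by auto
    moreover obtain u v where "K = {u..v}" "u \<le> v" using Kform tk by blast
    ultimately have "K = {u..u}" by auto
    then show ?thesis by simp
  qed simp
  have s1: "(\<Sum>(t,K)\<in>p. indicator Z t * norm (x (Sup K) - x (Inf K)))
       = (\<Sum>(t,K)\<in>p'. indicator Z t * norm (x (Sup K) - x (Inf K)))"
    by (rule sum.mono_neutral_right[OF fp p'sub]) (use zero in auto)
  also have "\<dots> = (\<Sum>(t,K)\<in>p'. norm (x (Sup K) - x (Inf K)))"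
    by (rule sum.cong) (auto simp: p'_def)
  also have "\<dots> = (\<Sum>K\<in>q. norm (x (Sup K) - x (Inf K)))"
    unfolding q_def by (simp add: sum.reindex[OF inj] case_prod_unfold)
  finally have S1: "(\<Sum>(t,K)\<in>p. indicator Z t * norm (x (Sup K) - x (Inf K)))
       = (\<Sum>K\<in>q. norm (x (Sup K) - x (Inf K)))" .
  have "(\<Sum>K\<in>q. vol K) = (\<Sum>(t,K)\<in>p'. vol K)"
    unfolding q_def by (simp add: sum.reindex[OF inj] case_prod_unfold)
  also have "\<dots> = (\<Sum>(t,K)\<in>p'. vol K * indicator Z t)"
    by (rule sum.cong) (auto simp: p'_def)
  also have "\<dots> \<le> (\<Sum>(t,K)\<in>p. vol K * indicator Z t)"
    by (rule sum_mono2[OF fp p'sub]) auto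
  finally have S2: "(\<Sum>K\<in>q. vol K) < \<delta>" using small by linarith
  have c1: "\<forall>K\<in>q. \<exists>u v. K = {u..v} \<and> u < v \<and> {u..v} \<subseteq> S"
  proof
    fix K assume "K \<in> q"
    then obtain t where tk: "(t,K) \<in> p'" unfolding q_def by force
    then obtain u v where uv: "K = {u..v}" "u \<le> v" "K \<subseteq> {a..b}" using Kform p'_def by blast
    moreover have "vol K > 0" using tk p'_def by auto
    ultimately show "\<exists>u v. K = {u..v} \<and> u < v \<and> {u..v} \<subseteq> S" using sub
      by (intro exI[of _ u] exI[of _ v]) (auto split: if_splits)
  qed
  have c2: "\<forall>K\<in>q. \<forall>K'\<in>q. K \<noteq> K' \<longrightarrow> interior K \<inter> interior K' = {}"
  proof (intro ballI impI)
    fix K K' assume "K \<in> q" "K' \<in> q" "K \<noteq> K'"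
    then obtain t t' where "(t,K) \<in> p'" "(t',K') \<in> p'" unfolding q_def by force
    then show "interior K \<inter> interior K' = {}"
      using tagged_division_ofD(5)[OF p, of t K t' K'] \<open>K \<noteq> K'\<close> p'_def by auto
  qed
  have "finite q" using fp' q_def by simp
  from dprop[OF this c1 c2 S2] S1 show ?thesis by simp
qed

lemma ac_ftc_approx:
  fixes x G :: "real \<Rightarrow> 'a::euclidean_space"
  assumes ab: "a \<le> b" and ac: "abs_continuous_on S x" and sub: "{a..b} \<subseteq> S"
    and G: "continuous_on {a..b} G" and N: "negligible N"
    and der: "\<And>t. t \<in> {a<..<b} \<Longrightarrow> t \<notin> N \<Longrightarrow> (x has_vector_derivative G t) (at t)"
    and e: "e > 0"
  shows "norm (x b - x a - integral {a..b} G) \<le> e * (b - a + 3)"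
proof -
  define I where "I = integral {a..b} G"
  have intG: "(G has_integral I) (cbox a b)"
    using integrable_continuous_real[OF G] unfolding I_def by (simp add: integrable_integral)
  obtain B where B: "B > 0" "\<And>t. t \<in> {a..b} \<Longrightarrow> norm (G t) \<le> B"
    using compact_imp_bounded[OF compact_continuous_image[OF G compact_Icc]]
    unfolding bounded_pos by auto
  obtain \<delta> where d: "\<delta> > 0" and dprop: "\<And>q. finite q \<Longrightarrow> (\<forall>K\<in>q. \<exists>u v. K = {u..v} \<and> u < v \<and> {u..v} \<subseteq> S) \<Longrightarrow>
      (\<forall>K\<in>q. \<forall>K'\<in>q. K \<noteq> K' \<longrightarrow> interior K \<inter> interior K' = {}) \<Longrightarrow>
      (\<Sum>K\<in>q. vol K) < \<delta> \<Longrightarrow> (\<Sum>K\<in>q. norm (x (Sup K) - x (Inf K))) < e"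
    by (rule ac_finite_sum[OF ac e], rule that)
  define Z where "Z = N \<union> {a,b}"
  have negZ: "negligible Z" using N unfolding Z_def by simp
  obtain \<gamma>1 where g1: "gauge \<gamma>1" and g1p: "\<forall>D. D tagged_division_of (cbox a b) \<and> \<gamma>1 fine D \<longrightarrow>
        norm ((\<Sum>(t, K)\<in>D. vol K *\<^sub>R G t) - I) < e"
    using intG[unfolded has_integral, rule_format, OF e] by (elim exE conjE) (rule that)
  have h0: "(indicat_real Z has_integral 0) (cbox a b)" using negZ unfolding negligible by blast
  have mpos: "min \<delta> (e / B) > 0" using d e B by simp
  obtain \<gamma>2 where g2: "gauge \<gamma>2" and g2p: "\<forall>D. D tagged_division_of (cbox a b) \<and> \<gamma>2 fine D \<longrightarrow>
        norm ((\<Sum>(t, K)\<in>D. vol K *\<^sub>R indicat_real Z t) - 0) < min \<delta> (e / B)"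
    using h0[unfolded has_integral, rule_format, OF mpos] by (elim exE conjE) (rule that)
  define P where "P t d \<longleftrightarrow> d > 0 \<and> (\<forall>y. \<bar>y - t\<bar> < d \<longrightarrow> norm (x y - x t - (y - t) *\<^sub>R G t) \<le> e * \<bar>y - t\<bar>)" for t d
  have exP: "\<exists>d. P t d" if "t \<in> {a..b} - Z" for t
  proof -
    have "t \<in> {a<..<b}" "t \<notin> N" using that Z_def by auto
    then have "(x has_derivative (\<lambda>h. h *\<^sub>R G t)) (at t within UNIV)"
      using der has_vector_derivative_def by blast
    then obtain d where "d > 0" "\<forall>y\<in>UNIV. norm (y - t) < d \<longrightarrow> norm (x y - x t - (y - t) *\<^sub>R G t) \<le> e * norm (y - t)"
      using e unfolding has_derivative_within_alt by blast
    then show ?thesis unfolding P_def by auto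
  qed
  define dd where "dd t = (if t \<in> {a..b} - Z then (SOME d. P t d) else 1)" for t
  have ddP: "P t (dd t)" if "t \<in> {a..b} - Z" for t
    using someI_ex[OF exP[OF that]] that unfolding dd_def by simp
  have ddpos: "\<forall>t. 0 < dd t"
  proof
    fix t show "0 < dd t"
    proof (cases "t \<in> {a..b} - Z")
      case True then show ?thesis using ddP[OF True] P_def by simp
    qed (auto simp: dd_def)
  qed
  have g3: "gauge (\<lambda>t. ball t (dd t))" by (rule gauge_ball_dependent[OF ddpos])
  obtain p where p: "p tagged_division_of {a..b}" and fine: "(\<lambda>t. \<gamma>1 t \<inter> (\<gamma>2 t \<inter> ball t (dd t))) fine p"
    using fine_division_exists_real[OF gauge_Int[OF g1 gauge_Int[OF g2 g3]]] by blast
  have pc: "p tagged_division_of cbox a b" using p by simp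
  have f1: "\<gamma>1 fine p" and f2: "\<gamma>2 fine p" and f3: "(\<lambda>t. ball t (dd t)) fine p"
    using fine unfolding fine_Int by auto
  have fp: "finite p" using p by blast
  have Kform: "\<exists>u v. K = {u..v} \<and> u \<le> t \<and> t \<le> v \<and> K \<subseteq> {a..b} \<and> K \<subseteq> ball t (dd t)" if tk: "(t,K) \<in> p" for t K
  proof -
    obtain u v where "K = cbox u v" using tagged_division_ofD(4)[OF p tk] by blast
    moreover have "t \<in> K" using tagged_division_ofD(2)[OF p tk] .
    moreover have "K \<subseteq> {a..b}" using tagged_division_ofD(3)[OF p tk] .
    moreover have "K \<subseteq> ball t (dd t)" using f3 tk unfolding fine_def by blast
    ultimately show ?thesis by auto
  qed
  define D where "D t K = x (Sup K) - x (Inf K) - vol K *\<^sub>R G t" for t K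
  have bnd: "norm (D t K) \<le> e * vol K + indicator Z t * norm (x (Sup K) - x (Inf K)) + B * (vol K * indicator Z t)"
    if tk: "(t,K) \<in> p" for t K
  proof -
    obtain u v where uv: "K = {u..v}" "u \<le> t" "t \<le> v" "K \<subseteq> {a..b}" "K \<subseteq> ball t (dd t)"
      using Kform[OF tk] by blast
    have tab: "t \<in> {a..b}" using uv by auto
    have vK: "vol K = v - u" "Sup K = v" "Inf K = u" using uv by auto
    show ?thesis
    proof (cases "t \<in> Z")
      case True
      have "norm (D t K) \<le> norm (x v - x u) + (v - u) * norm (G t)"
        unfolding D_def vK using uv norm_triangle_ineq4[of "x v - x u" "(v - u) *\<^sub>R G t"] by simp
      also have "\<dots> \<le> norm (x v - x u) + (v - u) * B"
        using B(2)[OF tab] uv by (intro add_left_mono mult_left_mono) auto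
      finally have "norm (D t K) \<le> norm (x v - x u) + (v - u) * B" .
      moreover have "0 \<le> e * (v - u)" using e uv by simp
      moreover have "e * vol K + indicator Z t * norm (x (Sup K) - x (Inf K)) + B * (vol K * indicator Z t)
          = e * (v - u) + norm (x v - x u) + (v - u) * B" using True vK by simp
      ultimately show ?thesis by linarith
    next
      case False
      then have Pt: "P t (dd t)" using ddP tab by blast
      have "u \<in> K" "v \<in> K" using uv(1-3) by auto
      then have "u \<in> ball t (dd t)" "v \<in> ball t (dd t)" using uv(5) by blast+
      then have uin: "\<bar>u - t\<bar> < dd t" and vin: "\<bar>v - t\<bar> < dd t"
        by (auto simp: dist_real_def abs_minus_commute)
      have A1: "norm (x v - x t - (v - t) *\<^sub>R G t) \<le> e * \<bar>v - t\<bar>" using Pt vin P_def by blast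
      have A2: "norm (x u - x t - (u - t) *\<^sub>R G t) \<le> e * \<bar>u - t\<bar>" using Pt uin P_def by blast
      have "D t K = (x v - x t - (v - t) *\<^sub>R G t) - (x u - x t - (u - t) *\<^sub>R G t)"
        unfolding D_def vK by (simp add: algebra_simps)
      then have "norm (D t K) \<le> norm (x v - x t - (v - t) *\<^sub>R G t) + norm (x u - x t - (u - t) *\<^sub>R G t)"
        by (simp only: norm_triangle_ineq4)
      then have "norm (D t K) \<le> e * \<bar>v - t\<bar> + e * \<bar>u - t\<bar>"
        using A1 A2 by linarith
      also have "\<dots> = e * vol K" using vK uv by (simp add: algebra_simps)
      finally show ?thesis using False by simp
    qed
  qed
  have E1: "x b - x a - (\<Sum>(t, K)\<in>p. vol K *\<^sub>R G t) = (\<Sum>(t,K)\<in>p. D t K)"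
    unfolding D_def additive_tagged_division_1[OF ab p, of x, symmetric]
    by (simp add: sum_subtractf case_prod_unfold)
  have "norm (\<Sum>(t,K)\<in>p. D t K) \<le> (\<Sum>(t,K)\<in>p. norm (D t K))"
    by (simp add: norm_sum case_prod_unfold)
  also have "\<dots> \<le> (\<Sum>(t,K)\<in>p. e * vol K + indicator Z t * norm (x (Sup K) - x (Inf K)) + B * (vol K * indicator Z t))"
    by (rule sum_mono) (use bnd in auto)
  also have "\<dots> = e * (\<Sum>(t,K)\<in>p. vol K) + (\<Sum>(t,K)\<in>p. indicator Z t * norm (x (Sup K) - x (Inf K)))
       + B * (\<Sum>(t,K)\<in>p. vol K * indicator Z t)"
    by (simp add: sum.distrib sum_distrib_left case_prod_unfold)
  finally have E2: "norm (\<Sum>(t,K)\<in>p. D t K) \<le> e * (\<Sum>(t,K)\<in>p. vol K) + (\<Sum>(t,K)\<in>p. indicator Z t * norm (x (Sup K) - x (Inf K)))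
       + B * (\<Sum>(t,K)\<in>p. vol K * indicator Z t)" .
  have c1: "(\<Sum>(t,K)\<in>p. vol K) = b - a"
    using additive_content_tagged_division[OF pc] ab by simp
  have small: "\<bar>\<Sum>(t,K)\<in>p. vol K * indicator Z t\<bar> < min \<delta> (e / B)"
    using g2p[rule_format, OF conjI[OF pc f2]] by (simp add: case_prod_unfold)
  have sm1: "(\<Sum>(t,K)\<in>p. vol K * indicator Z t) < \<delta>" using small by linarith
  have sm2: "B * (\<Sum>(t,K)\<in>p. vol K * indicator Z t) < e"
  proof -
    have "(\<Sum>(t,K)\<in>p. vol K * indicator Z t) < e / B" using small by linarith
    then show ?thesis using B(1) by (simp add: field_simps)
  qed
  have c3: "(\<Sum>(t,K)\<in>p. indicator Z t * norm (x (Sup K) - x (Inf K))) < e"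
    by (rule tagged_Z_part[OF p sub dprop sm1])
  have R: "norm ((\<Sum>(t, K)\<in>p. vol K *\<^sub>R G t) - I) < e" using g1p[rule_format, OF conjI[OF pc f1]] .
  have "norm (x b - x a - I) \<le> norm (x b - x a - (\<Sum>(t, K)\<in>p. vol K *\<^sub>R G t)) + norm ((\<Sum>(t, K)\<in>p. vol K *\<^sub>R G t) - I)"
    using norm_triangle_ineq[of "x b - x a - (\<Sum>(t, K)\<in>p. vol K *\<^sub>R G t)" "(\<Sum>(t, K)\<in>p. vol K *\<^sub>R G t) - I"]
    by simp
  also have "\<dots> \<le> e * (b - a) + e + e + e"
  proof -
    have "norm (x b - x a - (\<Sum>(t, K)\<in>p. vol K *\<^sub>R G t)) = norm (\<Sum>(t,K)\<in>p. D t K)"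
      using E1 by simp
    moreover have "e * (\<Sum>(t,K)\<in>p. vol K) = e * (b - a)" using c1 by simp
    ultimately show ?thesis using E2 c3 sm2 R by linarith
  qed
  finally show ?thesis unfolding I_def by (simp add: algebra_simps)
qed

lemma half_aux: "(c::real) > 0 \<Longrightarrow> d / (2 * c) * c = d / 2"
  by (simp add: field_simps)

lemma ac_ftc:
  fixes x G :: "real \<Rightarrow> 'a::euclidean_space"
  assumes ab: "a \<le> b" and ac: "abs_continuous_on S x" and sub: "{a..b} \<subseteq> S"
    and G: "continuous_on {a..b} G" and N: "negligible N"
    and der: "\<And>t. t \<in> {a<..<b} \<Longrightarrow> t \<notin> N \<Longrightarrow> (x has_vector_derivative G t) (at t)"
  shows "x b - x a = integral {a..b} G"
proof (rule ccontr)
  let ?d = "norm (x b - x a - integral {a..b} G)"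
  assume "x b - x a \<noteq> integral {a..b} G"
  then have dpos: "?d > 0" by simp
  define e where "e = ?d / (2 * (b - a + 3))"
  have c3: "b - a + 3 > 0" using ab by simp
  have epos: "e > 0" unfolding e_def using dpos c3 by (intro divide_pos_pos) auto
  have "?d \<le> e * (b - a + 3)" by (rule ac_ftc_approx[OF ab ac sub G N der epos])
  also have "\<dots> = ?d / 2" unfolding e_def by (rule half_aux[OF c3])
  finally show False using dpos by simp
qed

lemma ac_uc:
  fixes x :: "real \<Rightarrow> 'a::real_normed_vector"
  assumes ac: "abs_continuous_on S x"
  shows "uniformly_continuous_on S x"
  unfolding uniformly_continuous_on_def
proof (intro allI impI)
  fix e :: real assume e: "e > 0"
  obtain d where d: "d > 0" and dd: "\<And>(n::nat) (a::nat\<Rightarrow>real) b.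
        (\<forall>k<n. a k \<le> b k \<and> a k \<in> S \<and> b k \<in> S) \<and>
        (\<forall>k<n. \<forall>l<n. k \<noteq> l \<longrightarrow> b k \<le> a l \<or> b l \<le> a k) \<and>
        (\<Sum>k<n. b k - a k) < d
        \<Longrightarrow> (\<Sum>k<n. norm (x (b k) - x (a k))) < e"
    using ac[unfolded abs_continuous_on_def, rule_format, OF e] by auto
  show "\<exists>d>0. \<forall>s\<in>S. \<forall>t\<in>S. dist t s < d \<longrightarrow> dist (x t) (x s) < e"
  proof (intro exI[of _ d] conjI ballI impI d)
    fix s t assume s: "s \<in> S" and t: "t \<in> S" and st: "dist t s < d"
    have prem: "(\<forall>k::nat<1. min s t \<le> max s t \<and> min s t \<in> S \<and> max s t \<in> S) \<and>
        (\<forall>k::nat<1. \<forall>l::nat<1. k \<noteq> l \<longrightarrow> max s t \<le> min s t \<or> max s t \<le> min s t) \<and>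
        (\<Sum>k<(1::nat). max s t - min s t) < d"
      using s t st by (auto simp: dist_real_def max_def min_def less_one)
    have "(\<Sum>k<(1::nat). norm (x ((\<lambda>_. max s t) k) - x ((\<lambda>_. min s t) k))) < e"
      by (rule dd[of 1 "\<lambda>_. min s t" "\<lambda>_. max s t", OF prem])
    then have "norm (x (max s t) - x (min s t)) < e" by simp
    then show "dist (x t) (x s) < e"
      by (cases "s \<le> t") (auto simp: dist_norm norm_minus_commute max_def min_def)
  qed
qed

lemma cont_halfline:
  fixes h :: "real \<Rightarrow> 'a::topological_space"
  assumes "\<And>T. T \<ge> 0 \<Longrightarrow> continuous_on {0..T} h"
  shows "continuous_on {0..} h"
  unfolding continuous_on_eq_continuous_within
proof
  fix t :: real assume t: "t \<in> {0..}"
  then have "continuous (at t within {0..t+1}) h"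
    using assms[of "t+1"] by (simp add: continuous_on_eq_continuous_within)
  moreover have "at t within {0..t+1} = at t within {0..}"
    by (rule at_within_nhd[of _ "{..<t+1}"]) auto
  ultimately show "continuous (at t within {0..}) h" by simp
qed

lemma pow_diff_le:
  fixes a b :: real
  assumes "0 \<le> b" "b \<le> a" "a \<le> 1"
  shows "a ^ n - b ^ n \<le> n * (a - b)"
proof (induction n)
  case 0 then show ?case by simp
next
  case (Suc n)
  have bn: "0 \<le> b ^ n" "b ^ n \<le> 1" using assms by (auto intro: power_le_one)
  have an: "b ^ n \<le> a ^ n" using assms by (intro power_mono) auto
  have "a ^ Suc n - b ^ Suc n = a * (a ^ n - b ^ n) + b ^ n * (a - b)" by (simp add: algebra_simps)
  also have "\<dots> \<le> 1 * (a ^ n - b ^ n) + 1 * (a - b)"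
    using assms bn an by (intro add_mono mult_right_mono) auto
  also have "\<dots> \<le> Suc n * (a - b)" using Suc by (simp add: algebra_simps)
  finally show ?case .
qed

lemma exp_neg_quad:
  fixes y :: real assumes y: "0 \<le> y"
  shows "exp (- y) - (1 - y) \<le> y\<^sup>2"
proof -
  have e1: "1 + y \<le> exp y" by (rule exp_ge_add_one_self)
  have "exp (- y) = 1 / exp y" by (simp add: exp_minus field_simps)
  also have "\<dots> \<le> 1 / (1 + y)" using e1 y by (intro divide_left_mono) auto
  finally have "exp (- y) \<le> 1 / (1 + y)" .
  moreover have "1 / (1 + y) - (1 - y) = y\<^sup>2 / (1 + y)" using y by (simp add: field_simps power2_eq_square)
  moreover have "y\<^sup>2 / (1 + y) \<le> y\<^sup>2" using y by (simp add: divide_le_eq field_simps)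
  ultimately show ?thesis by linarith
qed

lemma exp_neg_lip:
  fixes s t :: real assumes st: "0 \<le> s" "s \<le> t"
  shows "\<bar>exp (- s) - exp (- t)\<bar> \<le> t - s"
proof -
  define c where "c = exp (- s)"
  define w where "w = 1 - exp (s - t)"
  have "exp (- t) = exp (- s) * exp (s - t)" by (simp flip: exp_add)
  then have eq: "exp (- s) - exp (- t) = c * w" unfolding c_def w_def by (simp add: algebra_simps)
  have "1 + (s - t) \<le> exp (s - t)" by (rule exp_ge_add_one_self)
  then have w1: "w \<le> t - s" unfolding w_def by linarith
  have w0: "0 \<le> w" unfolding w_def using st by simp
  have c0: "0 \<le> c" "c \<le> 1" unfolding c_def using st by auto
  have "c * w \<le> w" using c0 w0 by (simp add: mult_left_le_one_le)
  moreover have "0 \<le> c * w" using c0 w0 by simp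
  ultimately show ?thesis using eq w1 by simp
qed

locale game =
  fixes V :: "(real^'n) set"
    and U :: "'p::finite \<Rightarrow> (real^'m) set"
    and g :: "real^'n \<Rightarrow> ('p \<Rightarrow> real^'m) \<Rightarrow> real^'n"
    and f :: "'p \<Rightarrow> real^'n \<Rightarrow> ('p \<Rightarrow> real^'m) \<Rightarrow> real"
    and \<phi> :: "'p \<Rightarrow> real^'n \<Rightarrow> real^'m"
    and \<rho> Lg M Ls :: real and L :: "'p \<Rightarrow> real"
  assumes rho: "\<rho> > 0"
    and adm: "admissible V U g \<phi>"
    and disc: "\<And>h x0 n. h > 0 \<Longrightarrow> x0 \<in> V \<Longrightarrow> euler g \<phi> h x0 n \<in> V"
    and Ls: "Ls > 0"
    and lip_phi: "\<And>i x1 x2. x1 \<in> V \<Longrightarrow> x2 \<in> V \<Longrightarrow> norm (\<phi> i x1 - \<phi> i x2) \<le> Ls * norm (x1 - x2)"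
    and H1: "\<And>x y u v. x \<in> V \<Longrightarrow> y \<in> V \<Longrightarrow> (\<forall>j. u j \<in> U j) \<Longrightarrow> (\<forall>j. v j \<in> U j) \<Longrightarrow>
               norm (g x u - g y v) \<le> Lg * (norm (x - y) + (\<Sum>j\<in>UNIV. norm (u j - v j)))"
    and H2: "\<And>i x y u v. x \<in> V \<Longrightarrow> y \<in> V \<Longrightarrow> (\<forall>j. u j \<in> U j) \<Longrightarrow> (\<forall>j. v j \<in> U j) \<Longrightarrow>
               \<bar>f i x u - f i y v\<bar> \<le> L i * (norm (x - y) + (\<Sum>j\<in>UNIV. norm (u j - v j)))"
    and H3: "\<And>i x u. x \<in> V \<Longrightarrow> (\<forall>j. u j \<in> U j) \<Longrightarrow> \<bar>f i x u\<bar> \<le> M"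
begin

definition L1 :: real where "L1 = \<bar>Lg\<bar> * (1 + real CARD('p) * Ls)"
definition Lf :: "'p \<Rightarrow> real" where "Lf i = \<bar>L i\<bar> * (1 + real CARD('p) * Ls)"

lemma L1_nonneg: "L1 \<ge> 0" unfolding L1_def using Ls by simp
lemma Lf_nonneg: "Lf i \<ge> 0" unfolding Lf_def using Ls by simp

lemma ctrlU: "y \<in> V \<Longrightarrow> \<forall>j. \<phi> j y \<in> U j"
  using adm unfolding admissible_def by blast

lemma sum_phi: assumes "y \<in> V" "z \<in> V"
  shows "(\<Sum>j\<in>UNIV. norm (\<phi> j y - \<phi> j z)) \<le> real CARD('p) * Ls * norm (y - z)"
proof -
  have "(\<Sum>j\<in>UNIV. norm (\<phi> j y - \<phi> j z)) \<le> (\<Sum>j\<in>(UNIV::'p set). Ls * norm (y - z))"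
    by (rule sum_mono) (rule lip_phi[OF assms])
  also have "\<dots> = real CARD('p) * Ls * norm (y - z)" by simp
  finally show ?thesis .
qed

lemma lipG: assumes y: "y \<in> V" and z: "z \<in> V"
  shows "norm (g y (\<lambda>j. \<phi> j y) - g z (\<lambda>j. \<phi> j z)) \<le> L1 * norm (y - z)"
proof -
  let ?A = "norm (y - z) + (\<Sum>j\<in>UNIV. norm (\<phi> j y - \<phi> j z))"
  have "norm (g y (\<lambda>j. \<phi> j y) - g z (\<lambda>j. \<phi> j z)) \<le> Lg * ?A"
    using H1[OF y z ctrlU[OF y] ctrlU[OF z]] by simp
  also have "\<dots> \<le> \<bar>Lg\<bar> * ?A" by (intro mult_right_mono add_nonneg_nonneg sum_nonneg norm_ge_zero) auto
  also have "\<dots> \<le> \<bar>Lg\<bar> * (norm (y - z) + real CARD('p) * Ls * norm (y - z))"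
    using sum_phi[OF y z] by (intro mult_left_mono) auto
  also have "\<dots> = L1 * norm (y - z)" unfolding L1_def by (simp add: algebra_simps)
  finally show ?thesis .
qed

lemma lipF: assumes y: "y \<in> V" and z: "z \<in> V"
  shows "\<bar>f i y (\<lambda>j. \<phi> j y) - f i z (\<lambda>j. \<phi> j z)\<bar> \<le> Lf i * norm (y - z)"
proof -
  let ?A = "norm (y - z) + (\<Sum>j\<in>UNIV. norm (\<phi> j y - \<phi> j z))"
  have "\<bar>f i y (\<lambda>j. \<phi> j y) - f i z (\<lambda>j. \<phi> j z)\<bar> \<le> L i * ?A"
    using H2[OF y z ctrlU[OF y] ctrlU[OF z]] by simp
  also have "\<dots> \<le> \<bar>L i\<bar> * ?A" by (intro mult_right_mono add_nonneg_nonneg sum_nonneg norm_ge_zero) auto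
  also have "\<dots> \<le> \<bar>L i\<bar> * (norm (y - z) + real CARD('p) * Ls * norm (y - z))"
    using sum_phi[OF y z] by (intro mult_left_mono) auto
  also have "\<dots> = Lf i * norm (y - z)" unfolding Lf_def by (simp add: algebra_simps)
  finally show ?thesis .
qed

lemma boundF: "y \<in> V \<Longrightarrow> \<bar>f i y (\<lambda>j. \<phi> j y)\<bar> \<le> M"
  by (rule H3) (auto dest: ctrlU)

lemma cont_gV: "continuous_on V (\<lambda>y. g y (\<lambda>j. \<phi> j y))"
proof (rule lipschitz_on_continuous_on)
  show "L1-lipschitz_on V (\<lambda>y. g y (\<lambda>j. \<phi> j y))"
    by (rule lipschitz_onI) (use lipG L1_nonneg in \<open>auto simp: dist_norm\<close>)
qed

lemma cont_fV: "continuous_on V (\<lambda>y. f i y (\<lambda>j. \<phi> j y))"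
proof (rule lipschitz_on_continuous_on)
  show "(Lf i)-lipschitz_on V (\<lambda>y. f i y (\<lambda>j. \<phi> j y))"
    by (rule lipschitz_onI) (use lipF Lf_nonneg in \<open>auto simp: dist_real_def dist_norm\<close>)
qed

end

context game
begin

abbreviation X where "X x0 \<equiv> traj V g \<phi> x0"
abbreviation G where "G x0 t \<equiv> g (X x0 t) (\<lambda>j. \<phi> j (X x0 t))"
abbreviation F where "F i x0 t \<equiv> f i (X x0 t) (\<lambda>j. \<phi> j (X x0 t))"

lemma sol: assumes "x0 \<in> V" shows "is_solution V g \<phi> x0 (X x0)"
proof -
  have "\<exists>x. is_solution V g \<phi> x0 x" using adm assms unfolding admissible_def by blast
  then show ?thesis unfolding traj_def by (rule someI_ex)
qed

lemma XV: "x0 \<in> V \<Longrightarrow> t \<ge> 0 \<Longrightarrow> X x0 t \<in> V"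
  using sol unfolding is_solution_def by blast

lemma X0: "x0 \<in> V \<Longrightarrow> X x0 0 = x0"
  using sol unfolding is_solution_def by blast

lemma contX: assumes x0: "x0 \<in> V" shows "continuous_on {0..} (X x0)"
proof (rule cont_halfline)
  fix T :: real assume "T \<ge> 0"
  then have "abs_continuous_on {0..T} (X x0)" using sol[OF x0] unfolding is_solution_def by blast
  then show "continuous_on {0..T} (X x0)"
    by (intro uniformly_continuous_imp_continuous ac_uc)
qed

lemma contG: assumes x0: "x0 \<in> V" shows "continuous_on {0..} (G x0)"
  by (rule continuous_on_compose2[OF cont_gV contX[OF x0]]) (use XV[OF x0] in auto)

lemma contF: assumes x0: "x0 \<in> V" shows "continuous_on {0..} (F i x0)"
  by (rule continuous_on_compose2[OF cont_fV contX[OF x0]]) (use XV[OF x0] in auto)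

lemma ftc: assumes x0: "x0 \<in> V" and st: "0 \<le> s" "s \<le> t"
  shows "X x0 t - X x0 s = integral {s..t} (G x0)"
proof -
  have S: "is_solution V g \<phi> x0 (X x0)" by (rule sol[OF x0])
  have ac: "abs_continuous_on {0..t} (X x0)" using S st unfolding is_solution_def by auto
  have ae: "AE r in lborel. 0 < r \<longrightarrow> (X x0 has_vector_derivative G x0 r) (at r)"
    using S unfolding is_solution_def by blast
  obtain N where N1: "\<And>r. r \<in> space lborel - N \<Longrightarrow> 0 < r \<longrightarrow> (X x0 has_vector_derivative G x0 r) (at r)"
    and N2: "N \<in> null_sets lborel"
    using AE_E3[OF ae] by blast
  have negN: "negligible N" unfolding negligible_iff_null_sets by (rule null_sets_completionI[OF N2])
  have cG: "continuous_on {s..t} (G x0)" by (rule continuous_on_subset[OF contG[OF x0]]) (use st in auto)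
  show ?thesis
  proof (rule ac_ftc[OF st(2) ac _ cG negN])
    show "{s..t} \<subseteq> {0..t}" using st by auto
    fix r assume "r \<in> {s<..<t}" "r \<notin> N"
    then show "(X x0 has_vector_derivative G x0 r) (at r)" using N1[of r] st by auto
  qed
qed

lemma boundG: assumes x0: "x0 \<in> V" and T: "T \<ge> 0"
  obtains B where "B > 0" "\<And>t. t \<in> {0..T} \<Longrightarrow> norm (G x0 t) \<le> B"
proof -
  have "continuous_on {0..T} (G x0)" by (rule continuous_on_subset[OF contG[OF x0]]) auto
  then have "bounded (G x0 ` {0..T})" by (intro compact_imp_bounded compact_continuous_image) auto
  then obtain B where "B > 0" "\<forall>y\<in>G x0 ` {0..T}. norm y \<le> B" unfolding bounded_pos by blast
  then show ?thesis using that by blast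
qed

lemma Xlip: assumes x0: "x0 \<in> V" and B: "\<And>t. t \<in> {0..T} \<Longrightarrow> norm (G x0 t) \<le> B"
  and st: "0 \<le> s" "s \<le> t" "t \<le> T"
  shows "norm (X x0 t - X x0 s) \<le> B * (t - s)"
proof -
  have cG: "continuous_on {s..t} (G x0)" by (rule continuous_on_subset[OF contG[OF x0]]) (use st in auto)
  have "norm (integral {s..t} (G x0)) \<le> B * (t - s)"
    by (rule integral_bound[OF st(2) cG]) (use B st in auto)
  then show ?thesis using ftc[OF x0 st(1,2)] by simp
qed

end

context game
begin

abbreviation xe where "xe h x0 n \<equiv> euler g \<phi> h x0 n"

lemma local_err:
  assumes x0: "x0 \<in> V" and B: "\<And>t. t \<in> {0..T} \<Longrightarrow> norm (G x0 t) \<le> B" and B0: "0 \<le> B"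
    and h: "h > 0" and s: "0 \<le> s" and sT: "s + h \<le> T"
  shows "norm (X x0 (s + h) - X x0 s - h *\<^sub>R G x0 s) \<le> L1 * B * h\<^sup>2"
proof -
  let ?t = "s + h"
  have st: "s \<le> ?t" using h by simp
  have cG: "continuous_on {s..?t} (G x0)" by (rule continuous_on_subset[OF contG[OF x0]]) (use s in auto)
  have "X x0 ?t - X x0 s - h *\<^sub>R G x0 s = integral {s..?t} (G x0) - integral {s..?t} (\<lambda>_. G x0 s)"
    using ftc[OF x0 s st] h by simp
  also have "\<dots> = integral {s..?t} (\<lambda>r. G x0 r - G x0 s)"
  proof -
    have i1: "G x0 integrable_on {s..?t}" by (rule integrable_continuous_real[OF cG])
    have i2: "(\<lambda>_. G x0 s) integrable_on {s..?t}" by (rule integrable_continuous_real) (rule continuous_on_const)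
    show ?thesis by (rule integral_diff[OF i1 i2, symmetric])
  qed
  finally have eq: "X x0 ?t - X x0 s - h *\<^sub>R G x0 s = integral {s..?t} (\<lambda>r. G x0 r - G x0 s)" .
  have cD: "continuous_on {s..?t} (\<lambda>r. G x0 r - G x0 s)" by (intro continuous_on_diff cG continuous_on_const)
  have bd: "norm (G x0 r - G x0 s) \<le> L1 * B * h" if r: "r \<in> {s..?t}" for r
  proof -
    have "norm (G x0 r - G x0 s) \<le> L1 * norm (X x0 r - X x0 s)"
      using r s by (intro lipG XV[OF x0]) auto
    also have "\<dots> \<le> L1 * (B * (r - s))"
      using r s sT by (intro mult_left_mono Xlip[OF x0 B] L1_nonneg) auto
    also have "\<dots> \<le> L1 * (B * h)"
    proof (rule mult_left_mono[OF _ L1_nonneg])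
      show "B * (r - s) \<le> B * h" using r B0 mult_left_mono[of "r - s" h B] by auto
    qed
    finally show ?thesis by (simp add: mult.assoc)
  qed
  have "norm (integral {s..?t} (\<lambda>r. G x0 r - G x0 s)) \<le> L1 * B * h * (?t - s)"
    by (rule integral_bound[OF st cD bd])
  then show ?thesis using eq by (simp add: power2_eq_square mult.assoc)
qed

lemma euler_err:
  assumes x0: "x0 \<in> V" and B: "\<And>t. t \<in> {0..T} \<Longrightarrow> norm (G x0 t) \<le> B" and B0: "0 \<le> B"
    and h: "h > 0"
  shows "real n * h \<le> T \<Longrightarrow> norm (xe h x0 n - X x0 (real n * h)) \<le> real n * (L1 * B * h\<^sup>2) * (1 + h * L1) ^ n"
proof (induction n)
  case 0 then show ?case using X0[OF x0] by simp
next
  case (Suc n)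
  let ?c = "L1 * B * h\<^sup>2"
  let ?s = "real n * h"
  have s0: "0 \<le> ?s" using h by simp
  have sT: "?s + h \<le> T" using Suc.prems by (simp add: algebra_simps)
  have c0: "0 \<le> ?c" using B0 L1_nonneg by simp
  have IH: "norm (xe h x0 n - X x0 ?s) \<le> real n * ?c * (1 + h * L1) ^ n"
    using Suc.IH sT h by simp
  have xeV: "xe h x0 n \<in> V" by (rule disc[OF h x0])
  have XsV: "X x0 ?s \<in> V" by (rule XV[OF x0 s0])
  have eq: "xe h x0 (Suc n) - X x0 (real (Suc n) * h) =
      (xe h x0 n - X x0 ?s) + h *\<^sub>R (g (xe h x0 n) (\<lambda>j. \<phi> j (xe h x0 n)) - G x0 ?s)
      - (X x0 (?s + h) - X x0 ?s - h *\<^sub>R G x0 ?s)"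
    by (simp add: algebra_simps scaleR_diff_right)
  have n1: "norm (h *\<^sub>R (g (xe h x0 n) (\<lambda>j. \<phi> j (xe h x0 n)) - G x0 ?s)) \<le> h * (L1 * norm (xe h x0 n - X x0 ?s))"
    using lipG[OF xeV XsV] h by (simp add: mult_left_mono)
  have n2: "norm (X x0 (?s + h) - X x0 ?s - h *\<^sub>R G x0 ?s) \<le> ?c"
    by (rule local_err[OF x0 B B0 h s0 sT])
  have "norm (xe h x0 (Suc n) - X x0 (real (Suc n) * h)) \<le>
      norm (xe h x0 n - X x0 ?s) + h * (L1 * norm (xe h x0 n - X x0 ?s)) + ?c"
  proof -
    let ?a = "xe h x0 n - X x0 ?s"
    let ?b = "h *\<^sub>R (g (xe h x0 n) (\<lambda>j. \<phi> j (xe h x0 n)) - G x0 ?s)"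
    let ?d = "X x0 (?s + h) - X x0 ?s - h *\<^sub>R G x0 ?s"
    have t1: "norm (?a + ?b - ?d) \<le> norm (?a + ?b) + norm ?d" by (rule norm_triangle_ineq4)
    have t2: "norm (?a + ?b) \<le> norm ?a + norm ?b" by (rule norm_triangle_ineq)
    show ?thesis unfolding eq using t1 t2 n1 n2 by linarith
  qed
  also have "\<dots> = (1 + h * L1) * norm (xe h x0 n - X x0 ?s) + ?c" by (simp add: algebra_simps)
  also have "\<dots> \<le> (1 + h * L1) * (real n * ?c * (1 + h * L1) ^ n) + ?c"
    using IH h L1_nonneg by (intro add_right_mono mult_left_mono) auto
  also have "\<dots> \<le> (1 + h * L1) * (real n * ?c * (1 + h * L1) ^ n) + ?c * (1 + h * L1) ^ Suc n"
  proof (intro add_left_mono)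
    have "1 \<le> (1 + h * L1) ^ Suc n" using h L1_nonneg by (intro one_le_power) simp
    then have "?c * 1 \<le> ?c * (1 + h * L1) ^ Suc n" by (rule mult_left_mono[OF _ c0])
    then show "?c \<le> ?c * (1 + h * L1) ^ Suc n" by simp
  qed
  also have "\<dots> = real (Suc n) * ?c * (1 + h * L1) ^ Suc n" by (simp add: algebra_simps)
  finally show ?case .
qed

lemma euler_err2:
  assumes x0: "x0 \<in> V" and B: "\<And>t. t \<in> {0..T} \<Longrightarrow> norm (G x0 t) \<le> B" and B0: "0 \<le> B"
    and h: "h > 0" and nT: "real n * h \<le> T"
  shows "norm (xe h x0 n - X x0 (real n * h)) \<le> (T * L1 * B * exp (L1 * T)) * h"
proof -
  have "(1 + h * L1) ^ n \<le> exp (h * L1) ^ n"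
    using h L1_nonneg by (intro power_mono) (auto simp: exp_ge_add_one_self add_nonneg_nonneg)
  also have "\<dots> = exp (L1 * (real n * h))" by (simp add: exp_of_nat_mult[symmetric] algebra_simps)
  also have "\<dots> \<le> exp (L1 * T)" using nT L1_nonneg by (simp add: mult_left_mono)
  finally have E: "(1 + h * L1) ^ n \<le> exp (L1 * T)" .
  have "norm (xe h x0 n - X x0 (real n * h)) \<le> real n * (L1 * B * h\<^sup>2) * (1 + h * L1) ^ n"
    by (rule euler_err[OF x0 B B0 h nT])
  also have "\<dots> = (real n * h) * (L1 * B * h) * (1 + h * L1) ^ n" by (simp add: power2_eq_square algebra_simps)
  also have "\<dots> \<le> T * (L1 * B * h) * exp (L1 * T)"
  proof -
    have T0: "0 \<le> T" using nT h by (meson mult_nonneg_nonneg of_nat_0_le_iff less_imp_le order_trans)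
    show ?thesis using nT E h B0 L1_nonneg T0 by (intro mult_mono) (auto simp: zero_le_mult_iff)
  qed
  also have "\<dots> = (T * L1 * B * exp (L1 * T)) * h" by (simp add: algebra_simps)
  finally show ?thesis .
qed

end

context game
begin

abbreviation Fd where "Fd i h x0 n \<equiv> f i (xe h x0 n) (\<lambda>j. \<phi> j (xe h x0 n))"
abbreviation Hc where "Hc i x0 t \<equiv> F i x0 t * exp (- \<rho> * t)"

lemma M0: assumes "x0 \<in> V" shows "0 \<le> M"
  using boundF[OF assms, of i] by linarith

lemma contH: assumes x0: "x0 \<in> V" shows "continuous_on {0..} (Hc i x0)"
  by (intro continuous_on_mult contF[OF x0] continuous_intros)

lemma abs_tri3: "\<bar>(a::real) - c\<bar> \<le> \<bar>a - b\<bar> + \<bar>b - c\<bar>"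
  using abs_triangle_ineq[of "a - b" "b - c"] by simp

lemma pointwise:
  assumes x0: "x0 \<in> V" and B: "\<And>t. t \<in> {0..T} \<Longrightarrow> norm (G x0 t) \<le> B" and B0: "0 \<le> B"
    and h: "h > 0" and rh: "\<rho> * h \<le> 1" and nT: "real n * h + h \<le> T"
    and t: "t \<in> {real n * h .. real n * h + h}"
  shows "\<bar>(1 - \<rho> * h) ^ n * Fd i h x0 n - Hc i x0 t\<bar>
          \<le> (Lf i * (T * L1 * B * exp (L1 * T) + B) + M * (\<rho>\<^sup>2 * T + \<rho>)) * h"
proof -
  let ?C = "T * L1 * B * exp (L1 * T)"
  let ?s = "real n * h"
  let ?\<beta> = "1 - \<rho> * h"
  have s0: "0 \<le> ?s" using h by simp
  have ts: "?s \<le> t" "t \<le> ?s + h" using t by auto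
  have t0: "0 \<le> t" using s0 ts by linarith
  have tT: "t \<le> T" using ts nT by linarith
  have sT: "?s \<le> T" using nT h by linarith
  have ths: "t - ?s \<le> h" using ts by linarith
  have M0: "0 \<le> M" by (rule M0[OF x0])
  have xeV: "xe h x0 n \<in> V" by (rule disc[OF h x0])
  have XtV: "X x0 t \<in> V" by (rule XV[OF x0 t0])
  have e1: "norm (xe h x0 n - X x0 ?s) \<le> ?C * h"
    by (rule euler_err2[OF x0 B B0 h sT])
  have e2: "norm (X x0 t - X x0 ?s) \<le> B * h"
  proof -
    have "norm (X x0 t - X x0 ?s) \<le> B * (t - ?s)" by (rule Xlip[OF x0 B s0 ts(1) tT])
    also have "\<dots> \<le> B * h" by (rule mult_left_mono[OF ths B0])
    finally show ?thesis .
  qed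
  have dF: "\<bar>Fd i h x0 n - F i x0 t\<bar> \<le> Lf i * (?C + B) * h"
  proof -
    have "\<bar>Fd i h x0 n - F i x0 t\<bar> \<le> Lf i * norm (xe h x0 n - X x0 t)" by (rule lipF[OF xeV XtV])
    also have "norm (xe h x0 n - X x0 t) \<le> norm (xe h x0 n - X x0 ?s) + norm (X x0 t - X x0 ?s)"
      using norm_triangle_ineq4[of "xe h x0 n - X x0 ?s" "X x0 t - X x0 ?s"] by simp
    then have "norm (xe h x0 n - X x0 t) \<le> (?C + B) * h" using e1 e2 by (simp add: algebra_simps)
    then have "Lf i * norm (xe h x0 n - X x0 t) \<le> Lf i * ((?C + B) * h)" by (rule mult_left_mono[OF _ Lf_nonneg])
    finally show ?thesis by (simp add: mult.assoc)
  qed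
  have b0: "0 \<le> ?\<beta>" using rh by simp
  have b1: "?\<beta> \<le> exp (- (\<rho> * h))" using exp_ge_add_one_self[of "- (\<rho> * h)"] by simp
  have ex1: "exp (- (\<rho> * h)) \<le> 1" using rho h by simp
  have bn0: "0 \<le> ?\<beta> ^ n" using b0 by simp
  have bn1: "?\<beta> ^ n \<le> 1" using b0 b1 ex1 by (intro power_le_one) auto
  have rh0: "0 \<le> \<rho> * h" using rho h by simp
  have dB1: "exp (- (\<rho> * h)) ^ n - ?\<beta> ^ n \<le> T * \<rho>\<^sup>2 * h"
  proof -
    have "exp (- (\<rho> * h)) ^ n - ?\<beta> ^ n \<le> real n * (exp (- (\<rho> * h)) - ?\<beta>)"
      by (rule pow_diff_le[OF b0 b1 ex1])
    also have "\<dots> \<le> real n * (\<rho> * h)\<^sup>2"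
      by (rule mult_left_mono[OF exp_neg_quad[OF rh0]]) simp
    also have "\<dots> = ?s * \<rho>\<^sup>2 * h" by (simp add: power2_eq_square)
    also have "\<dots> \<le> T * \<rho>\<^sup>2 * h"
      using sT h by (intro mult_right_mono) auto
    finally show ?thesis .
  qed
  have dB1': "0 \<le> exp (- (\<rho> * h)) ^ n - ?\<beta> ^ n" using b0 b1 by (simp add: power_mono)
  have dB2: "\<bar>exp (- (\<rho> * ?s)) - exp (- \<rho> * t)\<bar> \<le> \<rho> * h"
  proof -
    have r1: "0 \<le> \<rho> * ?s" using rho s0 by simp
    have r2: "\<rho> * ?s \<le> \<rho> * t" using rho ts by (intro mult_left_mono) auto
    have "\<bar>exp (- (\<rho> * ?s)) - exp (- (\<rho> * t))\<bar> \<le> \<rho> * t - \<rho> * ?s"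
      by (rule exp_neg_lip[OF r1 r2])
    also have "\<dots> = \<rho> * (t - ?s)" by (simp add: algebra_simps)
    also have "\<dots> \<le> \<rho> * h" using rho ths by (intro mult_left_mono) auto
    finally show ?thesis by simp
  qed
  have powexp: "exp (- (\<rho> * h)) ^ n = exp (- (\<rho> * ?s))" by (simp add: exp_of_nat_mult[symmetric] algebra_simps)
  have dB: "\<bar>?\<beta> ^ n - exp (- \<rho> * t)\<bar> \<le> (\<rho>\<^sup>2 * T + \<rho>) * h"
  proof -
    have "\<bar>?\<beta> ^ n - exp (- \<rho> * t)\<bar> \<le> \<bar>?\<beta> ^ n - exp (- (\<rho> * h)) ^ n\<bar> + \<bar>exp (- (\<rho> * h)) ^ n - exp (- \<rho> * t)\<bar>"
      by (rule abs_tri3)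
    also have "\<bar>?\<beta> ^ n - exp (- (\<rho> * h)) ^ n\<bar> = exp (- (\<rho> * h)) ^ n - ?\<beta> ^ n" using dB1' by simp
    finally show ?thesis using dB1 dB2 powexp by (simp add: algebra_simps)
  qed
  have Ft: "\<bar>F i x0 t\<bar> \<le> M" by (rule boundF[OF XtV])
  let ?P = "?\<beta> ^ n * (Fd i h x0 n - F i x0 t)"
  let ?Q = "F i x0 t * (?\<beta> ^ n - exp (- \<rho> * t))"
  have "(1 - \<rho> * h) ^ n * Fd i h x0 n - Hc i x0 t = ?P + ?Q"
    by (simp add: algebra_simps)
  then have "\<bar>(1 - \<rho> * h) ^ n * Fd i h x0 n - Hc i x0 t\<bar> \<le> \<bar>?P\<bar> + \<bar>?Q\<bar>"
    using abs_triangle_ineq[of ?P ?Q] by simp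
  also have "\<bar>?P\<bar> = ?\<beta> ^ n * \<bar>Fd i h x0 n - F i x0 t\<bar>" using bn0 by (simp add: abs_mult)
  also have "\<bar>?Q\<bar> = \<bar>F i x0 t\<bar> * \<bar>?\<beta> ^ n - exp (- \<rho> * t)\<bar>" by (simp add: abs_mult)
  also have "?\<beta> ^ n * \<bar>Fd i h x0 n - F i x0 t\<bar> + \<bar>F i x0 t\<bar> * \<bar>?\<beta> ^ n - exp (- \<rho> * t)\<bar>
      \<le> 1 * (Lf i * (?C + B) * h) + M * ((\<rho>\<^sup>2 * T + \<rho>) * h)"
    using bn0 bn1 dF dB Ft M0 by (intro add_mono mult_mono) auto
  also have "\<dots> = (Lf i * (?C + B) + M * (\<rho>\<^sup>2 * T + \<rho>)) * h" by (simp add: algebra_simps)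
  finally show ?thesis .
qed

end

context game
begin

lemma partial:
  assumes x0: "x0 \<in> V" and B: "\<And>t. t \<in> {0..T} \<Longrightarrow> norm (G x0 t) \<le> B" and B0: "0 \<le> B"
    and h: "h > 0" and rh: "\<rho> * h \<le> 1"
  shows "real N * h \<le> T \<Longrightarrow> \<bar>h * (\<Sum>n<N. (1 - \<rho> * h) ^ n * Fd i h x0 n) - integral {0..real N * h} (Hc i x0)\<bar>
     \<le> real N * h * ((Lf i * (T * L1 * B * exp (L1 * T) + B) + M * (\<rho>\<^sup>2 * T + \<rho>)) * h)"
proof (induction N)
  case 0 then show ?case by simp
next
  case (Suc N)
  let ?K = "(Lf i * (T * L1 * B * exp (L1 * T) + B) + M * (\<rho>\<^sup>2 * T + \<rho>)) * h"
  let ?s = "real N * h"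
  let ?a = "(1 - \<rho> * h) ^ N * Fd i h x0 N"
  have s0: "0 \<le> ?s" using h by simp
  have sT: "?s + h \<le> T" using Suc.prems by (simp add: algebra_simps)
  have IH: "\<bar>h * (\<Sum>n<N. (1 - \<rho> * h) ^ n * Fd i h x0 n) - integral {0..?s} (Hc i x0)\<bar> \<le> ?s * ?K"
    using Suc.IH sT h by simp
  have cH: "continuous_on {0..?s + h} (Hc i x0)" by (rule continuous_on_subset[OF contH[OF x0]]) auto
  have comb: "integral {0..?s} (Hc i x0) + integral {?s..?s + h} (Hc i x0) = integral {0..?s + h} (Hc i x0)"
    by (rule Henstock_Kurzweil_Integration.integral_combine[OF s0]) (use h integrable_continuous_real[OF cH] in auto)
  have cH2: "continuous_on {?s..?s + h} (Hc i x0)" by (rule continuous_on_subset[OF cH]) (use s0 in auto)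
  have i1: "(\<lambda>_. ?a) integrable_on {?s..?s + h}" by (rule integrable_continuous_real) (rule continuous_on_const)
  have i2: "Hc i x0 integrable_on {?s..?s + h}" by (rule integrable_continuous_real[OF cH2])
  have "h * ?a - integral {?s..?s + h} (Hc i x0) = integral {?s..?s + h} (\<lambda>_. ?a) - integral {?s..?s + h} (Hc i x0)"
    using h by simp
  also have "\<dots> = integral {?s..?s + h} (\<lambda>t. ?a - Hc i x0 t)" by (rule integral_diff[OF i1 i2, symmetric])
  finally have eq: "h * ?a - integral {?s..?s + h} (Hc i x0) = integral {?s..?s + h} (\<lambda>t. ?a - Hc i x0 t)" .
  have cD: "continuous_on {?s..?s + h} (\<lambda>t. ?a - Hc i x0 t)" by (intro continuous_on_diff continuous_on_const cH2)
  have "norm (integral {?s..?s + h} (\<lambda>t. ?a - Hc i x0 t)) \<le> ?K * (?s + h - ?s)"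
  proof (rule integral_bound[OF _ cD])
    show "?s \<le> ?s + h" using h by simp
    fix t assume "t \<in> {?s..?s + h}"
    then show "norm (?a - Hc i x0 t) \<le> ?K" using pointwise[OF x0 B B0 h rh sT] by simp
  qed
  then have loc: "\<bar>h * ?a - integral {?s..?s + h} (Hc i x0)\<bar> \<le> ?K * h" using eq by simp
  have "h * (\<Sum>n<Suc N. (1 - \<rho> * h) ^ n * Fd i h x0 n) - integral {0..real (Suc N) * h} (Hc i x0)
      = (h * (\<Sum>n<N. (1 - \<rho> * h) ^ n * Fd i h x0 n) - integral {0..?s} (Hc i x0))
        + (h * ?a - integral {?s..?s + h} (Hc i x0))"
    using comb by (simp add: algebra_simps)
  then have "\<bar>h * (\<Sum>n<Suc N. (1 - \<rho> * h) ^ n * Fd i h x0 n) - integral {0..real (Suc N) * h} (Hc i x0)\<bar>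
      \<le> ?s * ?K + ?K * h" using IH loc by linarith
  also have "\<dots> = real (Suc N) * h * ?K" by (simp add: algebra_simps)
  finally show ?case .
qed

end

context game
begin

lemma int_tail:
  assumes x0: "x0 \<in> V" and a: "0 \<le> a"
  shows "\<bar>integral {0..} (Hc i x0) - integral {0..a} (Hc i x0)\<bar> \<le> M * exp (- \<rho> * a) / \<rho>"
proof -
  have M0: "0 \<le> M" by (rule M0[OF x0])
  have cHa: "continuous_on {a..} (Hc i x0)" by (rule continuous_on_subset[OF contH[OF x0]]) (use a in auto)
  have meas: "Hc i x0 \<in> borel_measurable (lebesgue_on {a..})"
    by (rule continuous_imp_measurable_on_sets_lebesgue[OF cHa]) simp
  have gint: "((\<lambda>t. M * exp (- \<rho> * t)) has_integral M * (exp (- \<rho> * a) / \<rho>)) {a..}"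
    by (rule has_integral_mult_right[OF has_integral_exp_minus_to_infinity[OF rho]])
  have bnd: "\<bar>Hc i x0 t\<bar> \<le> M * exp (- \<rho> * t)" if t: "t \<in> {a..}" for t
  proof -
    have "X x0 t \<in> V" using t a by (intro XV[OF x0]) auto
    then have "\<bar>F i x0 t\<bar> \<le> M" by (rule boundF)
    then show ?thesis by (simp add: abs_mult mult_right_mono)
  qed
  have intHa: "Hc i x0 integrable_on {a..}"
    by (rule measurable_bounded_by_integrable_imp_integrable_real[OF meas _ bnd]) (use gint in auto)
  have cH0a: "continuous_on {0..a} (Hc i x0)" by (rule continuous_on_subset[OF contH[OF x0]]) auto
  have intH0a: "Hc i x0 integrable_on {0..a}" by (rule integrable_continuous_real[OF cH0a])
  have U: "{0..} = {0..a} \<union> {a..}" using a by auto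
  have negI: "negligible ({0..a} \<inter> {a..})"
  proof -
    have "{0..a} \<inter> {a..} = {a}" using a by auto
    then show ?thesis by simp
  qed
  have "integral {0..} (Hc i x0) = integral {0..a} (Hc i x0) + integral {a..} (Hc i x0)"
    unfolding U by (rule integral_Un[OF intH0a intHa negI])
  moreover have "norm (integral {a..} (Hc i x0)) \<le> integral {a..} (\<lambda>t. M * exp (- \<rho> * t))"
    by (rule integral_norm_bound_integral[OF intHa]) (use gint bnd in auto)
  moreover have "integral {a..} (\<lambda>t. M * exp (- \<rho> * t)) = M * (exp (- \<rho> * a) / \<rho>)"
    by (rule integral_unique[OF gint])
  ultimately show ?thesis by simp
qed

lemma sum_tail:
  assumes x0: "x0 \<in> V" and h: "h > 0" and rh: "\<rho> * h \<le> 1"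
  shows "summable (\<lambda>n. (1 - \<rho> * h) ^ n * Fd i h x0 n)"
    and "\<bar>h * (\<Sum>n. (1 - \<rho> * h) ^ n * Fd i h x0 n) - h * (\<Sum>n<N. (1 - \<rho> * h) ^ n * Fd i h x0 n)\<bar>
           \<le> M * exp (- \<rho> * (real N * h)) / \<rho>"
proof -
  let ?\<beta> = "1 - \<rho> * h"
  let ?f = "\<lambda>n. ?\<beta> ^ n * Fd i h x0 n"
  have M0: "0 \<le> M" by (rule M0[OF x0])
  have b0: "0 \<le> ?\<beta>" using rh by simp
  have b1: "?\<beta> < 1" using rho h by simp
  have nb: "norm ?\<beta> < 1" using b0 b1 by simp
  have fb: "norm (?f n) \<le> M * ?\<beta> ^ n" for n
  proof -
    have "\<bar>Fd i h x0 n\<bar> \<le> M" by (rule boundF[OF disc[OF h x0]])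
    moreover have "0 \<le> ?\<beta> ^ n" using b0 by simp
    ultimately have "?\<beta> ^ n * \<bar>Fd i h x0 n\<bar> \<le> ?\<beta> ^ n * M" by (rule mult_left_mono)
    then show ?thesis using b0 by (simp add: abs_mult mult.commute)
  qed
  have sg: "summable (\<lambda>n. M * ?\<beta> ^ n)" by (rule summable_mult[OF summable_geometric[OF nb]])
  show sf: "summable ?f" by (rule summable_comparison_test'[OF sg fb])
  have split: "suminf ?f = (\<Sum>n. ?f (n + N)) + (\<Sum>n<N. ?f n)" by (rule suminf_split_initial_segment[OF sf])
  have sg2: "summable (\<lambda>n. M * ?\<beta> ^ N * ?\<beta> ^ n)" by (rule summable_mult[OF summable_geometric[OF nb]])
  have fb2: "norm (?f (n + N)) \<le> M * ?\<beta> ^ N * ?\<beta> ^ n" for n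
    using fb[of "n + N"] by (simp add: power_add mult_ac)
  have "norm (\<Sum>n. ?f (n + N)) \<le> (\<Sum>n. M * ?\<beta> ^ N * ?\<beta> ^ n)" by (rule norm_suminf_le[OF fb2 sg2])
  also have "\<dots> = M * ?\<beta> ^ N * (1 / (1 - ?\<beta>))"
    by (simp add: suminf_mult[OF summable_geometric[OF nb]] suminf_geometric[OF nb])
  also have "\<dots> = M * ?\<beta> ^ N / (\<rho> * h)" by simp
  finally have tl: "\<bar>\<Sum>n. ?f (n + N)\<bar> \<le> M * ?\<beta> ^ N / (\<rho> * h)" by simp
  have "\<bar>h * suminf ?f - h * (\<Sum>n<N. ?f n)\<bar> = h * \<bar>\<Sum>n. ?f (n + N)\<bar>"
  proof -
    have "h * suminf ?f - h * (\<Sum>n<N. ?f n) = h * (\<Sum>n. ?f (n + N))" using split by (simp add: algebra_simps)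
    then show ?thesis using h by (simp add: abs_mult)
  qed
  also have "\<dots> \<le> h * (M * ?\<beta> ^ N / (\<rho> * h))" using tl h by (intro mult_left_mono) auto
  also have "\<dots> = M * ?\<beta> ^ N / \<rho>" using h by (simp add: field_simps)
  also have "\<dots> \<le> M * exp (- \<rho> * (real N * h)) / \<rho>"
  proof -
    have "?\<beta> ^ N \<le> exp (- (\<rho> * h)) ^ N"
      using b0 exp_ge_add_one_self[of "- (\<rho> * h)"] by (intro power_mono) auto
    also have "\<dots> = exp (- \<rho> * (real N * h))" by (simp add: exp_of_nat_mult[symmetric] algebra_simps)
    finally have "?\<beta> ^ N \<le> exp (- \<rho> * (real N * h))" .
    then show ?thesis using M0 rho by (intro divide_right_mono mult_left_mono) auto
  qed
  finally show "\<bar>h * suminf ?f - h * (\<Sum>n<N. ?f n)\<bar> \<le> M * exp (- \<rho> * (real N * h)) / \<rho>" .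
qed

end

lemma exp_tail_small:
  fixes \<rho> M e :: real assumes rho: "\<rho> > 0" and e: "e > 0"
  obtains T0 where "\<And>T. T \<ge> T0 \<Longrightarrow> M * exp (- \<rho> * T) / \<rho> < e"
proof -
  have "LIM T at_top. (- \<rho>) * T :> at_bot"
    by (rule filterlim_tendsto_neg_mult_at_bot[OF tendsto_const _ filterlim_ident]) (use rho in simp)
  then have l1: "((\<lambda>T. exp (- \<rho> * T)) \<longlongrightarrow> 0) at_top"
    by (rule filterlim_compose[OF exp_at_bot])
  have "((\<lambda>T. M * exp (- \<rho> * T) / \<rho>) \<longlongrightarrow> M * 0 / \<rho>) at_top"
    using rho by (intro tendsto_intros l1) simp
  then have "((\<lambda>T. M * exp (- \<rho> * T) / \<rho>) \<longlongrightarrow> 0) at_top" by simp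
  then have "eventually (\<lambda>T. M * exp (- \<rho> * T) / \<rho> < e) at_top"
    using e by (rule order_tendstoD(2))
  then obtain T0 where "\<forall>T\<ge>T0. M * exp (- \<rho> * T) / \<rho> < e" unfolding eventually_at_top_linorder by blast
  then show ?thesis using that by blast
qed

context game
begin

lemma main:
  assumes x0: "x0 \<in> V"
  shows "((\<lambda>h. \<bar>payoff_h g f \<rho> h \<phi> i x0 - payoff V g f \<rho> \<phi> i x0\<bar>) \<longlongrightarrow> 0) (at_right 0)"
  unfolding tendsto_iff
proof (intro allI impI)
  fix e :: real assume e: "e > 0"
  have M0: "0 \<le> M" by (rule M0[OF x0])
  have e4: "e / 4 > 0" using e by simp
  obtain T0 where T0: "\<And>T. T \<ge> T0 \<Longrightarrow> M * exp (- \<rho> * T) / \<rho> < e / 4"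
    using exp_tail_small[OF rho e4] by blast
  define T where "T = max T0 0"
  have T0': "T \<ge> 0" "T \<ge> T0" unfolding T_def by auto
  define T1 where "T1 = T + 1"
  have T1: "T1 \<ge> 0" using T0' unfolding T1_def by simp
  obtain B where B0': "B > 0" and B: "\<And>t. t \<in> {0..T1} \<Longrightarrow> norm (G x0 t) \<le> B"
    using boundG[OF x0 T1] by blast
  have B0: "0 \<le> B" using B0' by simp
  define K where "K = Lf i * (T1 * L1 * B * exp (L1 * T1) + B) + M * (\<rho>\<^sup>2 * T1 + \<rho>)"
  have K0: "0 \<le> K" unfolding K_def using Lf_nonneg L1_nonneg B0 T1 M0 rho
    by (intro add_nonneg_nonneg mult_nonneg_nonneg) auto
  define d where "d = min 1 (min (1 / \<rho>) (e / (2 * (T1 * K + 1))))"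
  have TK: "0 < T1 * K + 1" using T1 K0 by (simp add: add_nonneg_pos)
  have d0: "d > 0" unfolding d_def using rho e TK by simp
  show "eventually (\<lambda>h. dist \<bar>payoff_h g f \<rho> h \<phi> i x0 - payoff V g f \<rho> \<phi> i x0\<bar> 0 < e) (at_right 0)"
    unfolding eventually_at_right_field
  proof (intro exI[of _ d] conjI allI impI d0)
    fix h :: real assume h: "h > 0" and hd: "h < d"
    have h1: "h \<le> 1" using hd unfolding d_def by simp
    have rh: "\<rho> * h \<le> 1"
    proof -
      have "h \<le> 1 / \<rho>" using hd unfolding d_def by simp
      then show ?thesis using rho by (simp add: field_simps)
    qed
    have he: "h * (T1 * K + 1) < e / 2"
    proof -
      have "h < e / (2 * (T1 * K + 1))" using hd unfolding d_def by simp
      then show ?thesis using TK by (simp add: field_simps)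
    qed
    define N where "N = nat \<lceil>T / h\<rceil>"
    have Nr: "real N = of_int \<lceil>T / h\<rceil>" unfolding N_def using T0' h by simp
    have NT1: "T \<le> real N * h"
    proof -
      have "T / h \<le> real N" using Nr by simp
      then show ?thesis using h by (simp add: field_simps)
    qed
    have NT2: "real N * h \<le> T1"
    proof -
      have "real N < T / h + 1" using Nr by linarith
      then have "real N * h < (T / h + 1) * h" using h by (simp add: mult_strict_right_mono)
      also have "\<dots> = T + h" using h by (simp add: field_simps)
      finally show ?thesis using h1 unfolding T1_def by simp
    qed
    let ?S = "\<Sum>n. (1 - \<rho> * h) ^ n * Fd i h x0 n"
    let ?P = "\<Sum>n<N. (1 - \<rho> * h) ^ n * Fd i h x0 n"
    let ?I = "integral {0..real N * h} (Hc i x0)"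
    let ?W = "integral {0..} (Hc i x0)"
    have eqh: "payoff_h g f \<rho> h \<phi> i x0 = h * ?S" unfolding payoff_h_def by simp
    have eqW: "payoff V g f \<rho> \<phi> i x0 = ?W" unfolding payoff_def by simp
    have a1: "\<bar>h * ?S - h * ?P\<bar> \<le> M * exp (- \<rho> * (real N * h)) / \<rho>"
      by (rule sum_tail(2)[OF x0 h rh])
    have a2: "\<bar>h * ?P - ?I\<bar> \<le> real N * h * (K * h)"
      using partial[OF x0 B B0 h rh NT2] unfolding K_def by simp
    have a3: "\<bar>?W - ?I\<bar> \<le> M * exp (- \<rho> * (real N * h)) / \<rho>"
      by (rule int_tail[OF x0]) (use h in simp)
    have t4: "M * exp (- \<rho> * (real N * h)) / \<rho> < e / 4" using T0 NT1 T0' by simp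
    have a2': "real N * h * (K * h) \<le> T1 * K * h"
    proof -
      have "0 \<le> K * h" using K0 h by simp
      from mult_right_mono[OF NT2 this] show ?thesis by (simp add: mult.assoc)
    qed
    have a4: "T1 * K * h < e / 2" using he h by (simp add: algebra_simps)
    have "\<bar>h * ?S - ?W\<bar> \<le> \<bar>h * ?S - h * ?P\<bar> + \<bar>h * ?P - ?I\<bar> + \<bar>?W - ?I\<bar>" by linarith
    then have "\<bar>h * ?S - ?W\<bar> < e" using a1 a2 a3 t4 a2' a4 by linarith
    then show "dist \<bar>payoff_h g f \<rho> h \<phi> i x0 - payoff V g f \<rho> \<phi> i x0\<bar> 0 < e"
      unfolding eqh eqW by simp
  qed
qed

end

theorem proposition1:
  fixes V :: "(real^'n) set"
    and U :: "'p::finite \<Rightarrow> (real^'m) set"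
    and g :: "real^'n \<Rightarrow> ('p \<Rightarrow> real^'m) \<Rightarrow> real^'n"
    and f :: "'p \<Rightarrow> real^'n \<Rightarrow> ('p \<Rightarrow> real^'m) \<Rightarrow> real"
    and \<phi> :: "'p \<Rightarrow> real^'n \<Rightarrow> real^'m"
    and \<rho> Lg M Ls :: real and L :: "'p \<Rightarrow> real"
  assumes rho: "\<rho> > 0"
    and adm: "admissible V U g \<phi>"
    and disc: "\<And>h x0 n. h > 0 \<Longrightarrow> x0 \<in> V \<Longrightarrow> euler g \<phi> h x0 n \<in> V"
    and Ls: "Ls > 0"
    and lip_phi: "\<And>i x1 x2. x1 \<in> V \<Longrightarrow> x2 \<in> V \<Longrightarrow> norm (\<phi> i x1 - \<phi> i x2) \<le> Ls * norm (x1 - x2)"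
    and H1: "\<And>x y u v. x \<in> V \<Longrightarrow> y \<in> V \<Longrightarrow> (\<forall>j. u j \<in> U j) \<Longrightarrow> (\<forall>j. v j \<in> U j) \<Longrightarrow>
               norm (g x u - g y v) \<le> Lg * (norm (x - y) + (\<Sum>j\<in>UNIV. norm (u j - v j)))"
    and H2: "\<And>i x y u v. x \<in> V \<Longrightarrow> y \<in> V \<Longrightarrow> (\<forall>j. u j \<in> U j) \<Longrightarrow> (\<forall>j. v j \<in> U j) \<Longrightarrow>
               \<bar>f i x u - f i y v\<bar> \<le> L i * (norm (x - y) + (\<Sum>j\<in>UNIV. norm (u j - v j)))"
    and H3: "\<And>i x u. x \<in> V \<Longrightarrow> (\<forall>j. u j \<in> U j) \<Longrightarrow> \<bar>f i x u\<bar> \<le> M"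
  shows "\<forall>x\<in>V. \<forall>i. ((\<lambda>h. \<bar>payoff_h g f \<rho> h \<phi> i x - payoff V g f \<rho> \<phi> i x\<bar>) \<longlongrightarrow> 0) (at_right 0)"
proof -
  interpret game V U g f \<phi> \<rho> Lg M Ls L
    by unfold_locales (fact assms)+
  show ?thesis using main by blast
qed

end
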